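(* $\mathrm{HS}_{\mathsf{lin}}\not\geq\mathrm{HS}_{\mathsf{st}}$ and $\mathrm{HS}_{\mathsf{lin}}\not\geq\mathrm{HS}_{\mathsf{ct}}$: there is an $\mathrm{HS}$ formula $\psi$ such that no $\mathrm{HS}$ formula $\varphi$ satisfies, for every finite Kripke structure $K$, $K\models_{\mathsf{lin}}\varphi$ iff $K\models_{\mathsf{st}}\psi$; and there is an $\mathrm{HS}$ formula $\psi'$ such that no $\mathrm{HS}$ formula $\varphi$ satisfies, for every finite Kripke structure $K$, $K\models_{\mathsf{lin}}\varphi$ iff $K\models_{\mathsf{ct}}\psi'$.
   Context: A Kripke structure over a finite set $\mathcal{AP}$ is $K=(\mathcal{AP},S,\delta,\mu,s_0)$ with states $S$, left-total $\delta\subseteq S\times S$, labelling $\mu:S\to2^{\mathcal{AP}}$, initial state $s_0$; finite if $S$ is finite. Infinite paths are infinite state sequences following $\delta$; traces are their non-empty finite prefixes; initial means starting at $s_0$. For a finite word $w=w(0)\cdots w(n)$, $\mathrm{Pref}(w)=\{w[0,i]\mid0\le i\le n-1\}$, $\mathrm{Suff}(w)=\{w[i,n]\mid1\le i\le n\}$. The computation tree $C(K)$ has as states the initial traces of $K$, initial state $s_0$, labelling $\rho\mapsto\mu(\text{last state of }\rho)$, transitions $(\rho,\rho\cdot s)$. $\mathrm{HS}$ formulas: $\psi::=p\mid\neg\psi\mid\psi\wedge\psi\mid\langle X\rangle\psi$ for the Allen relations $A,L,B,E,D,O$ and inverses; all definable (non-strict semantics) from $\langle B\rangle,\langle E\rangle,\langle\bar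 B\rangle,\langle\bar E\rangle$. State-based semantics over traces: $\rho\models p$ iff $p\in\mu(s)$ for every state $s$ of $\rho$; $\langle B\rangle\psi$: some $\rho'\in\mathrm{Pref}(\rho)$ satisfies $\psi$; $\langle E\rangle\psi$: some $\rho'\in\mathrm{Suff}(\rho)$; $\langle\bar B\rangle\psi$: some trace $\rho'$ with $\rho\in\mathrm{Pref}(\rho')$; $\langle\bar E\rangle\psi$: some trace $\rho'$ with $\rho\in\mathrm{Suff}(\rho')$. $K\models_{\mathsf{st}}\psi$ iff every initial trace satisfies $\psi$; $K\models_{\mathsf{ct}}\psi$ iff $C(K)\models_{\mathsf{st}}\psi$. Trace-based: for an infinite path $\pi$, intervals $[i,j]$, $0\le i\le j$; $[i,j]\models p$ iff $p\in\mu(\pi(h))$ for all $i\le h\le j$; $[x,y]\models\langle B\rangle\psi$ iff $[x,z]\models\psi$ for some $x\le z<y$; $\langle E\rangle$: $[v,y]$ for some $x<v\le y$; $\langle\bar B\rangle$: $[x,z]$ for some $z>y$; $\langle\bar E\rangle$: $[v,y]$ for some $v<x$. $K\models_{\mathsf{lin}}\psi$ iff for every initial infinite path $\pi$ and $i\ge0$, $[0,i]\models\psi$ in $\pi$. *)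

theory Defs
  imports Main
begin

record ('p, 's) kripke =
  AP :: "'p set"
  states :: "'s set"
  trans :: "('s \<times> 's) set"
  lab :: "'s \<Rightarrow> 'p set"
  init :: 's

definition is_kripke :: "('p, 's) kripke \<Rightarrow> bool" where
  "is_kripke K \<longleftrightarrow> finite (AP K) \<and> trans K \<subseteq> states K \<times> states K
     \<and> (\<forall>s\<in>states K. \<exists>t. (s, t) \<in> trans K)
     \<and> (\<forall>s\<in>states K. lab K s \<subseteq> AP K) \<and> init K \<in> states K"

definition finite_kripke :: "('p, 's) kripke \<Rightarrow> bool" where
  "finite_kripke K \<longleftrightarrow> is_kripke K \<and> finite (states K)"

definition is_trace :: "('p, 's) kripke \<Rightarrow> 's list \<Rightarrow> bool" where
  "is_trace K \<rho> \<longleftrightarrow> \<rho> \<noteq> [] \<and> set \<rho> \<subseteq> states K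
     \<and> (\<forall>i. Suc i < length \<rho> \<longrightarrow> (\<rho> ! i, \<rho> ! Suc i) \<in> trans K)"

definition is_init_trace :: "('p, 's) kripke \<Rightarrow> 's list \<Rightarrow> bool" where
  "is_init_trace K \<rho> \<longleftrightarrow> is_trace K \<rho> \<and> hd \<rho> = init K"

definition is_path :: "('p, 's) kripke \<Rightarrow> (nat \<Rightarrow> 's) \<Rightarrow> bool" where
  "is_path K \<pi> \<longleftrightarrow> (\<forall>i. \<pi> i \<in> states K \<and> (\<pi> i, \<pi> (Suc i)) \<in> trans K)"

definition is_init_path :: "('p, 's) kripke \<Rightarrow> (nat \<Rightarrow> 's) \<Rightarrow> bool" where
  "is_init_path K \<pi> \<longleftrightarrow> is_path K \<pi> \<and> \<pi> 0 = init K"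

definition comp_tree :: "('p, 's) kripke \<Rightarrow> ('p, 's list) kripke" where
  "comp_tree K = \<lparr> AP = AP K,
     states = {\<rho>. is_init_trace K \<rho>},
     trans = {(\<rho>, \<rho> @ [s]) | \<rho> s. is_init_trace K \<rho> \<and> (last \<rho>, s) \<in> trans K},
     lab = (\<lambda>\<rho>. lab K (last \<rho>)),
     init = [init K] \<rparr>"

datatype 'p hs =
    Prop 'p
  | Neg "'p hs"
  | And "'p hs" "'p hs"
  | DiaB "'p hs"
  | DiaE "'p hs"
  | DiaBt "'p hs"
  | DiaEt "'p hs"

definition Or :: "'p hs \<Rightarrow> 'p hs \<Rightarrow> 'p hs" where
  "Or \<phi> \<psi> = Neg (And (Neg \<phi>) (Neg \<psi>))"

text \<open>Derived Allen modalities (non-strict semantics).\<close>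
definition DiaA :: "'p hs \<Rightarrow> 'p hs" where "DiaA \<phi> = DiaEt (DiaBt \<phi>) "
definition DiaD :: "'p hs \<Rightarrow> 'p hs" where "DiaD \<phi> = DiaB (DiaE \<phi>)"
definition DiaDt :: "'p hs \<Rightarrow> 'p hs" where "DiaDt \<phi> = DiaBt (DiaEt \<phi>)"

fun sat_st :: "('p, 's) kripke \<Rightarrow> 's list \<Rightarrow> 'p hs \<Rightarrow> bool" where
  "sat_st K \<rho> (Prop p) \<longleftrightarrow> (\<forall>s\<in>set \<rho>. p \<in> lab K s)"
| "sat_st K \<rho> (Neg \<phi>) \<longleftrightarrow> \<not> sat_st K \<rho> \<phi>"
| "sat_st K \<rho> (And \<phi> \<psi>) \<longleftrightarrow> sat_st K \<rho> \<phi> \<and> sat_st K \<rho> \<psi>"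
| "sat_st K \<rho> (DiaB \<phi>) \<longleftrightarrow> (\<exists>k. 1 \<le> k \<and> k < length \<rho> \<and> sat_st K (take k \<rho>) \<phi>)"
| "sat_st K \<rho> (DiaE \<phi>) \<longleftrightarrow> (\<exists>k. 1 \<le> k \<and> k < length \<rho> \<and> sat_st K (drop k \<rho>) \<phi>)"
| "sat_st K \<rho> (DiaBt \<phi>) \<longleftrightarrow> (\<exists>\<sigma>. \<sigma> \<noteq> [] \<and> is_trace K (\<rho> @ \<sigma>) \<and> sat_st K (\<rho> @ \<sigma>) \<phi>)"
| "sat_st K \<rho> (DiaEt \<phi>) \<longleftrightarrow> (\<exists>\<sigma>. \<sigma> \<noteq> [] \<and> is_trace K (\<sigma> @ \<rho>) \<and> sat_st K (\<sigma> @ \<rho>) \<phi>)"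

definition models_st :: "('p, 's) kripke \<Rightarrow> 'p hs \<Rightarrow> bool" where
  "models_st K \<psi> \<longleftrightarrow> (\<forall>\<rho>. is_init_trace K \<rho> \<longrightarrow> sat_st K \<rho> \<psi>)"

definition models_ct :: "('p, 's) kripke \<Rightarrow> 'p hs \<Rightarrow> bool" where
  "models_ct K \<psi> \<longleftrightarrow> models_st (comp_tree K) \<psi>"

fun sat_lin :: "('p, 's) kripke \<Rightarrow> (nat \<Rightarrow> 's) \<Rightarrow> nat \<Rightarrow> nat \<Rightarrow> 'p hs \<Rightarrow> bool" where
  "sat_lin K \<pi> x y (Prop p) \<longleftrightarrow> (\<forall>h. x \<le> h \<and> h \<le> y \<longrightarrow> p \<in> lab K (\<pi> h))"
| "sat_lin K \<pi> x y (Neg \<phi>) \<longleftrightarrow> \<not> sat_lin K \<pi> x y \<phi>"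
| "sat_lin K \<pi> x y (And \<phi> \<psi>) \<longleftrightarrow> sat_lin K \<pi> x y \<phi> \<and> sat_lin K \<pi> x y \<psi>"
| "sat_lin K \<pi> x y (DiaB \<phi>) \<longleftrightarrow> (\<exists>z. x \<le> z \<and> z < y \<and> sat_lin K \<pi> x z \<phi>)"
| "sat_lin K \<pi> x y (DiaE \<phi>) \<longleftrightarrow> (\<exists>v. x < v \<and> v \<le> y \<and> sat_lin K \<pi> v y \<phi>)"
| "sat_lin K \<pi> x y (DiaBt \<phi>) \<longleftrightarrow> (\<exists>z. y < z \<and> sat_lin K \<pi> x z \<phi>)"
| "sat_lin K \<pi> x y (DiaEt \<phi>) \<longleftrightarrow> (\<exists>v. v < x \<and> sat_lin K \<pi> v y \<phi>)"

definition models_lin :: "('p, 's) kripke \<Rightarrow> 'p hs \<Rightarrow> bool" where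
  "models_lin K \<phi> \<longleftrightarrow> (\<forall>\<pi> i. is_init_path K \<pi> \<longrightarrow> sat_lin K \<pi> 0 i \<phi>)"

end

theory Submission
  imports Defs
begin

lemma sat_lin_cong:
  "\<forall>h. lab K (\<pi> h) = lab K' (\<pi>' h) \<Longrightarrow> sat_lin K \<pi> x y \<phi> = sat_lin K' \<pi>' x y \<phi>"
  by (induction \<phi> arbitrary: x y) auto

lemma lin_transfer:
  assumes "\<And>\<pi>. is_init_path K \<pi> \<Longrightarrow> \<exists>\<pi>'. is_init_path K' \<pi>' \<and> (\<forall>h. lab K (\<pi> h) = lab K' (\<pi>' h))"
    and "models_lin K' \<phi>"
  shows "models_lin K \<phi>"
  using assms sat_lin_cong unfolding models_lin_def by metis

lemma closed_tree:
  assumes "is_trace (comp_tree K) \<tau>" "\<forall>a\<in>S. \<forall>b. (a,b) \<in> trans K \<longrightarrow> b \<in> S"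
    "last (\<tau>!i) \<in> S"
  shows "j < length \<tau> \<Longrightarrow> i \<le> j \<Longrightarrow> last (\<tau>!j) \<in> S"
proof (induction j)
  case 0
  then show ?case using assms by auto
next
  case (Suc j)
  show ?case
  proof (cases "i = Suc j")
    case True then show ?thesis using assms by simp
  next
    case False
    then have ij: "i \<le> j" using Suc by simp
    have IH: "last (\<tau>!j) \<in> S" using Suc ij by simp
    have "(\<tau>!j, \<tau>!Suc j) \<in> trans (comp_tree K)" using assms(1) Suc(2) unfolding is_trace_def by blast
    then obtain s where "\<tau>!Suc j = \<tau>!j @ [s]" "(last (\<tau>!j), s) \<in> trans K"
      unfolding comp_tree_def by auto
    then show ?thesis using IH assms(2) by auto
  qed
qed

definition KA :: "(nat, nat) kripke" where
  "KA = \<lparr> AP = {0}, states = {0,1}, trans = {(0,0),(1,0)},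
          lab = (\<lambda>s. if s = 1 then {0} else {}), init = 0 \<rparr>"

definition KB :: "(nat, nat) kripke" where
  "KB = \<lparr> AP = {0}, states = {0}, trans = {(0,0)},
          lab = (\<lambda>s. {}), init = 0 \<rparr>"

lemma KA_fin: "finite_kripke KA"
  unfolding finite_kripke_def is_kripke_def KA_def by auto

lemma KB_fin: "finite_kripke KB"
  unfolding finite_kripke_def is_kripke_def KB_def by auto

lemma KA_path0:
  assumes "is_init_path KA \<pi>" shows "\<pi> h = 0"
proof (induction h)
  case 0 then show ?case using assms unfolding is_init_path_def KA_def by simp
next
  case (Suc h)
  have "(\<pi> h, \<pi> (Suc h)) \<in> trans KA" using assms unfolding is_init_path_def is_path_def by blast
  then show ?case using Suc unfolding KA_def by auto
qed

lemma KB_path0: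
  assumes "is_init_path KB \<pi>" shows "\<pi> h = 0"
  using assms unfolding is_init_path_def is_path_def KB_def by auto

lemma lin_AB: "models_lin KA \<phi> = models_lin KB \<phi>"
proof
  assume "models_lin KB \<phi>"
  then show "models_lin KA \<phi>"
  proof (rule lin_transfer[rotated])
    fix \<pi> assume "is_init_path KA \<pi>"
    then have "\<forall>h. \<pi> h = 0" using KA_path0 by blast
    moreover have "is_init_path KB (\<lambda>_. 0)" unfolding is_init_path_def is_path_def KB_def by simp
    ultimately show "\<exists>\<pi>'. is_init_path KB \<pi>' \<and> (\<forall>h. lab KA (\<pi> h) = lab KB (\<pi>' h))"
      by (intro exI[of _ "\<lambda>_. 0"]) (simp add: KA_def KB_def)
  qed
next
  assume "models_lin KA \<phi>"
  then show "models_lin KB \<phi>"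
  proof (rule lin_transfer[rotated])
    fix \<pi> assume "is_init_path KB \<pi>"
    then have "\<forall>h. \<pi> h = 0" using KB_path0 by blast
    moreover have "is_init_path KA (\<lambda>_. 0)" unfolding is_init_path_def is_path_def KA_def by simp
    ultimately show "\<exists>\<pi>'. is_init_path KA \<pi>' \<and> (\<forall>h. lab KB (\<pi> h) = lab KA (\<pi>' h))"
      by (intro exI[of _ "\<lambda>_. 0"]) (simp add: KA_def KB_def)
  qed
qed

definition psi1 :: "nat hs" where "psi1 = DiaEt (DiaB (Prop 0))"

lemma KA_st: "models_st KA psi1"
  unfolding models_st_def psi1_def
proof (intro allI impI)
  fix \<rho> assume r: "is_init_trace KA \<rho>"
  then have ne: "\<rho> \<noteq> []" and h: "hd \<rho> = 0" and st: "set \<rho> \<subseteq> {0,1}"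
    and tr: "\<forall>i. Suc i < length \<rho> \<longrightarrow> (\<rho> ! i, \<rho> ! Suc i) \<in> trans KA"
    unfolding is_init_trace_def is_trace_def KA_def by auto
  have "is_trace KA ([1] @ \<rho>)"
    unfolding is_trace_def
  proof (intro conjI allI impI)
    show "set ([1] @ \<rho>) \<subseteq> states KA" using st by (simp add: KA_def)
    fix i assume i: "Suc i < length ([1] @ \<rho>)"
    show "(([1] @ \<rho>) ! i, ([1] @ \<rho>) ! Suc i) \<in> trans KA"
    proof (cases i)
      case 0 then show ?thesis using ne h by (cases \<rho>) (auto simp: KA_def)
    next
      case (Suc m) then show ?thesis using tr i by auto
    qed
  qed simp
  moreover have "sat_st KA ([1] @ \<rho>) (DiaB (Prop 0))"
    using ne by (auto intro!: exI[of _ 1] simp: KA_def)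
  ultimately show "sat_st KA \<rho> (DiaEt (DiaB (Prop 0)))"
    unfolding sat_st.simps(7) by (auto simp del: sat_st.simps intro!: exI[of _ "[1]"])
qed

lemma KB_st: "\<not> models_st KB psi1"
proof -
  have "is_init_trace KB [0]" unfolding is_init_trace_def is_trace_def KB_def by simp
  moreover have "\<not> sat_st KB [0] psi1"
  proof -
    have P: "\<And>ys. sat_st KB ys (Prop 0) \<longleftrightarrow> ys = []" by (auto simp: KB_def)
    show ?thesis unfolding psi1_def sat_st.simps(7) sat_st.simps(4) P by auto
  qed
  ultimately show ?thesis unfolding models_st_def by blast
qed

definition L :: "nat \<Rightarrow> nat set" where
  "L s = (if s = 3 then {0} else if s = 4 then {1} else {})"

definition K1 :: "(nat, nat) kripke" where
  "K1 = \<lparr> AP = {0,1}, states = {0,1,2,3,4}, trans = {(0,1),(0,2),(1,3),(2,4),(3,3),(4,4)},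
          lab = L, init = 0 \<rparr>"

definition K2 :: "(nat, nat) kripke" where
  "K2 = \<lparr> AP = {0,1}, states = {0,1,2,3,4}, trans = {(0,1),(1,3),(1,4),(2,4),(3,3),(4,4)},
          lab = L, init = 0 \<rparr>"

lemma K1_fin: "finite_kripke K1"
  unfolding finite_kripke_def is_kripke_def K1_def L_def by auto

lemma K2_fin: "finite_kripke K2"
  unfolding finite_kripke_def is_kripke_def K2_def L_def by auto

lemma lin_12: "models_lin K1 \<phi> = models_lin K2 \<phi>"
proof
  assume "models_lin K2 \<phi>"
  then show "models_lin K1 \<phi>"
  proof (rule lin_transfer[rotated])
    fix \<pi> assume p: "is_init_path K1 \<pi>"
    define \<pi>' where "\<pi>' = (\<lambda>h. if \<pi> h = 2 then 1 else \<pi> h)"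
    have "is_init_path K2 \<pi>'"
      unfolding is_init_path_def is_path_def
    proof (intro conjI allI)
      fix i
      have "\<pi> i \<in> states K1" "(\<pi> i, \<pi> (Suc i)) \<in> trans K1"
        using p unfolding is_init_path_def is_path_def by auto
      then show "\<pi>' i \<in> states K2" "(\<pi>' i, \<pi>' (Suc i)) \<in> trans K2"
        unfolding \<pi>'_def K1_def K2_def by auto
    next
      show "\<pi>' 0 = init K2" using p unfolding \<pi>'_def is_init_path_def K1_def K2_def by simp
    qed
    moreover have "\<forall>h. lab K1 (\<pi> h) = lab K2 (\<pi>' h)"
      unfolding \<pi>'_def K1_def K2_def L_def by simp
    ultimately show "\<exists>\<pi>'. is_init_path K2 \<pi>' \<and> (\<forall>h. lab K1 (\<pi> h) = lab K2 (\<pi>' h))"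
      by blast
  qed
next
  assume "models_lin K1 \<phi>"
  then show "models_lin K2 \<phi>"
  proof (rule lin_transfer[rotated])
    fix \<pi> assume p: "is_init_path K2 \<pi>"
    define \<pi>' where "\<pi>' = (\<lambda>h. if \<pi> h = 1 \<and> \<pi> (Suc h) = 4 then 2 else \<pi> h)"
    have "is_init_path K1 \<pi>'"
      unfolding is_init_path_def is_path_def
    proof (intro conjI allI)
      fix i
      have "\<pi> i \<in> states K2" "(\<pi> i, \<pi> (Suc i)) \<in> trans K2"
        "(\<pi> (Suc i), \<pi> (Suc (Suc i))) \<in> trans K2"
        using p unfolding is_init_path_def is_path_def by auto
      then show "\<pi>' i \<in> states K1" "(\<pi>' i, \<pi>' (Suc i)) \<in> trans K1"
        unfolding \<pi>'_def K1_def K2_def by auto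
    next
      show "\<pi>' 0 = init K1" using p unfolding \<pi>'_def is_init_path_def K1_def K2_def by simp
    qed
    moreover have "\<forall>h. lab K2 (\<pi> h) = lab K1 (\<pi>' h)"
      unfolding \<pi>'_def K1_def K2_def L_def by simp
    ultimately show "\<exists>\<pi>'. is_init_path K1 \<pi>' \<and> (\<forall>h. lab K2 (\<pi> h) = lab K1 (\<pi>' h))"
      by blast
  qed
qed

definition Top :: "nat hs" where "Top = Neg (And (Prop 0) (Neg (Prop 0)))"

definition psi2 :: "nat hs" where
  "psi2 = Neg (And (DiaB Top) (And (DiaBt (DiaE (Prop 0))) (DiaBt (DiaE (Prop 1)))))"

lemma K2_ct: "\<not> models_ct K2 psi2"
proof -
  let ?C = "comp_tree K2"
  have it: "\<And>xs. is_init_trace K2 xs \<longleftrightarrow> xs \<in> states ?C" by (simp add: comp_tree_def)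
  have t0: "is_init_trace K2 [0]" unfolding is_init_trace_def is_trace_def K2_def by simp
  have t1: "is_init_trace K2 [0,1]" unfolding is_init_trace_def is_trace_def K2_def
    by (auto simp: less_Suc_eq)
  have t3: "is_init_trace K2 [0,1,3]" unfolding is_init_trace_def is_trace_def K2_def
    by (auto simp: less_Suc_eq nth_Cons split: nat.splits)
  have t4: "is_init_trace K2 [0,1,4]" unfolding is_init_trace_def is_trace_def K2_def
    by (auto simp: less_Suc_eq nth_Cons split: nat.splits)
  have e01: "([0],[0,1]) \<in> trans ?C"
    using t0 unfolding comp_tree_def by (auto simp: K2_def intro!: exI[of _ "[0]"])
  have e13: "([0,1],[0,1,3]) \<in> trans ?C"
    using t1 unfolding comp_tree_def by (auto simp: K2_def intro!: exI[of _ "[0,1]"])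
  have e14: "([0,1],[0,1,4]) \<in> trans ?C"
    using t1 unfolding comp_tree_def by (auto simp: K2_def intro!: exI[of _ "[0,1]"])
  have tr: "is_init_trace ?C [[0],[0,1]]"
    unfolding is_init_trace_def[of ?C] is_trace_def[of ?C] using t0 t1 e01
    by (auto simp: less_Suc_eq comp_tree_def K2_def)
  have tr3: "is_trace ?C ([[0],[0,1]] @ [[0,1,3]])"
    unfolding is_trace_def[of ?C] using t0 t1 t3 e01 e13
    by (auto simp: less_Suc_eq nth_Cons comp_tree_def split: nat.splits)
  have tr4: "is_trace ?C ([[0],[0,1]] @ [[0,1,4]])"
    unfolding is_trace_def[of ?C] using t0 t1 t4 e01 e14
    by (auto simp: less_Suc_eq nth_Cons comp_tree_def split: nat.splits)
  have s3: "sat_st ?C ([[0],[0,1]] @ [[0,1,3]]) (DiaE (Prop 0))"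
    by (simp del: append.simps add: comp_tree_def K2_def L_def) (rule exI[of _ 2], simp)
  have s4: "sat_st ?C ([[0],[0,1]] @ [[0,1,4]]) (DiaE (Prop 1))"
    by (simp del: append.simps add: comp_tree_def K2_def L_def) (rule exI[of _ 2], simp)
  have "sat_st ?C [[0],[0,1]] (DiaB Top)"
    by (simp add: Top_def) (rule exI[of _ 1], simp)
  moreover have "sat_st ?C [[0],[0,1]] (DiaBt (DiaE (Prop 0)))"
    unfolding sat_st.simps(6) using tr3 s3 by blast
  moreover have "sat_st ?C [[0],[0,1]] (DiaBt (DiaE (Prop 1)))"
    unfolding sat_st.simps(6) using tr4 s4 by blast
  ultimately have "\<not> sat_st ?C [[0],[0,1]] psi2" unfolding psi2_def by simp
  then show ?thesis using tr unfolding models_ct_def models_st_def by blast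
qed

lemma no_ext:
  assumes "2 \<le> length \<tau>" "last (\<tau>!1) \<in> S" "\<forall>a\<in>S. \<forall>b. (a,b) \<in> trans K1 \<longrightarrow> b \<in> S"
    "\<forall>x\<in>S. q \<notin> L x"
  shows "\<not> sat_st (comp_tree K1) \<tau> (DiaBt (DiaE (Prop q)))"
proof
  assume "sat_st (comp_tree K1) \<tau> (DiaBt (DiaE (Prop q)))"
  then obtain \<sigma> k where tr: "is_trace (comp_tree K1) (\<tau> @ \<sigma>)" and k: "1 \<le> k" "k < length (\<tau> @ \<sigma>)"
    and P: "\<forall>s\<in>set (drop k (\<tau> @ \<sigma>)). q \<in> lab (comp_tree K1) s" by auto
  let ?u = "\<tau> @ \<sigma>"
  have u1: "?u ! 1 = \<tau> ! 1" using assms(1) by (simp add: nth_append)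
  have "last (?u ! (length ?u - 1)) \<in> S"
    by (rule closed_tree[OF tr assms(3), of 1]) (use u1 assms(1,2) in auto)
  moreover have "last ?u \<in> set (drop k ?u)"
    using k by (metis drop_eq_Nil last_drop last_in_set not_le)
  then have "q \<in> L (last (last ?u))" using P by (simp add: comp_tree_def K1_def)
  moreover have "last ?u = ?u ! (length ?u - 1)" using k by (subst last_conv_nth) auto
  ultimately show False using assms(4) by auto
qed

lemma K1_ct: "models_ct K1 psi2"
  unfolding models_ct_def models_st_def
proof (intro allI impI)
  fix \<tau> assume it: "is_init_trace (comp_tree K1) \<tau>"
  show "sat_st (comp_tree K1) \<tau> psi2"
  proof (cases "2 \<le> length \<tau>")
    case False
    then show ?thesis unfolding psi2_def by auto
  next
    case True
    have "hd \<tau> = [0]" using it by (simp add: is_init_trace_def comp_tree_def K1_def)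
    then have h0: "\<tau> ! 0 = [0]" using True by (cases \<tau>) auto
    have "(\<tau> ! 0, \<tau> ! Suc 0) \<in> trans (comp_tree K1)"
      using it True unfolding is_init_trace_def is_trace_def by auto
    then obtain s where s: "\<tau> ! 1 = [0] @ [s]" "(0, s) \<in> trans K1"
      using h0 unfolding comp_tree_def by auto
    then have "s = 1 \<or> s = 2" by (auto simp: K1_def)
    then show ?thesis
    proof
      assume "s = 1"
      then have "\<not> sat_st (comp_tree K1) \<tau> (DiaBt (DiaE (Prop 1)))"
        using s by (intro no_ext[OF True, of "{1,3}"]) (auto simp: K1_def L_def)
      then show ?thesis unfolding psi2_def by auto
    next
      assume "s = 2"
      then have "\<not> sat_st (comp_tree K1) \<tau> (DiaBt (DiaE (Prop 0)))"
        using s by (intro no_ext[OF True, of "{2,4}"]) (auto simp: K1_def L_def)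
      then show ?thesis unfolding psi2_def by auto
    qed
  qed
qed

theorem proposition5p3:
  shows "(\<exists>\<psi> :: nat hs. \<not> (\<exists>\<phi>. \<forall>K :: (nat, nat) kripke.
            finite_kripke K \<longrightarrow> (models_lin K \<phi> \<longleftrightarrow> models_st K \<psi>)))
       \<and> (\<exists>\<psi>' :: nat hs. \<not> (\<exists>\<phi>. \<forall>K :: (nat, nat) kripke.
            finite_kripke K \<longrightarrow> (models_lin K \<phi> \<longleftrightarrow> models_ct K \<psi>')))"
proof
  show "\<exists>\<psi> :: nat hs. \<not> (\<exists>\<phi>. \<forall>K :: (nat, nat) kripke.
            finite_kripke K \<longrightarrow> (models_lin K \<phi> \<longleftrightarrow> models_st K \<psi>))"
    using KA_fin KB_fin lin_AB KA_st KB_st by blast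
  show "\<exists>\<psi>' :: nat hs. \<not> (\<exists>\<phi>. \<forall>K :: (nat, nat) kripke.
            finite_kripke K \<longrightarrow> (models_lin K \<phi> \<longleftrightarrow> models_ct K \<psi>'))"
    using K1_fin K2_fin lin_12 K1_ct K2_ct by blast
qed

end
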